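(* Consider the asynchronous network Newton method described in the context with $n\ge2$ and stepsize $0<\varepsilon<\min\{1,2(\lambda/\Lambda)^2\}$, and let $\beta=\frac{\alpha m\varepsilon(2\lambda^2-\varepsilon\Lambda^2)}{n\lambda}\in(0,1)$. Then for all $t\ge1$, $$\mathbb{E}\Big[\big\|D(t-1)^{1/2}(x(t)-x^* )\big\|\Big]\le\left(\frac{2\,(2(1-\delta)+\alpha M)\,(1-\beta)^t}{\alpha m}\big(F(x(0))-F^*\big)\right)^{1/2};$$ in particular this sequence converges to $0$ linearly (in expectation).
   Context: Setup. Let $n\ge 1$ be the number of agents and $\alpha>0$ a scalar. $W\in\mathbb{R}^{n\times n}$ is a symmetric nonnegative matrix with $W\mathbb{1}=\mathbb{1}$ (where $\mathbb{1}$ is the all-ones vector), $\mathrm{null}(I-W)=\mathrm{span}\{\mathbb{1}\}$, $0\le W_{ij}<1$ for all $i,j$, and $\delta\le W_{ii}\le\Delta$ for all $i$, for constants $0<\delta\le\Delta<1$. Each $f_i:\mathbb{R}\to\mathbb{R}$ is twice continuously differentiable with $0<m\le f_i''(s)\le M<\infty$ for all $s$ and $|f_i''(a)-f_i''(b)|\le L|a-b|$ for all $a,b$. Define $F(x)=\frac12 x^T(I-W)x+\alpha\sum_{i=1}^n f_i(x_i)$ for $x\in\mathbb{R}^n$, with minimum value $F^*$ and minimizer $x^*$. Let $g(x)=\nabla F(x)$, $G(x)=\mathrm{diag}(f_1''(x_1),\dots,f_n''(x_n))$, $H(x)=\nabla^2F(x)=I-W+\alpha G(x)$. Let $W_d$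 be the diagonal matrix with $[W_d]_{ii}=W_{ii}$, and set $D(x)=\alpha G(x)+2(I-W_d)$ (diagonal, positive definite) and $B=I-2W_d+W$, so $H(x)=D(x)-B$. Define the approximate Hessian inverse $\hat H(x)^{-1}=D(x)^{-1/2}\big(I+D(x)^{-1/2}BD(x)^{-1/2}\big)D(x)^{-1/2}$. Constants: $\rho=\frac{2(1-\delta)}{2(1-\delta)+\alpha m}$, $\Lambda=\frac{1+\rho}{2(1-\Delta)+\alpha m}$, $\lambda=\frac{1}{2(1-\delta)+\alpha M}$. Algorithm (asynchronous network Newton). Given $x(0)\in\mathbb{R}^n$ and stepsize $\varepsilon>0$, let $\Phi(1),\Phi(2),\dots$ be i.i.d. random diagonal $n\times n$ matrices, each equal to $e_ie_i^T$ (the matrix with a single $1$ in position $(i,i)$ and zeros elsewhere) with probability $1/n$ for each $i=1,\dots,n$ (i.e., one uniformly random agent is active per iteration). The iterates are $x(t)=x(t-1)-\varepsilon\,\Phi(t)\hat H(x(t-1))^{-1}g(x(t-1))$, $t\ge1$. Write $g(t)=g(x(t))$, $D(t)=D(x(t))$, $H(t)=H(x(t))$, $\hat H(t)^{-1}=\hat H(x(t))^{-1}$. $\mathcal{F}_t$ denotes the $\sigma$-field generated by $\Phi(1),\dots,\Phi(t)$ (so $x(t)$ is $\mathcal{F}_t$-measurable). *)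

theory Defs
  imports "HOL-Analysis.Analysis"
begin

definition diag_mat :: "('n::finite \<Rightarrow> real) \<Rightarrow> real^'n^'n" where
  "diag_mat d = (\<chi> i j. if i = j then d i else 0)"

definition objF :: "real^'n^'n \<Rightarrow> real \<Rightarrow> ('n::finite \<Rightarrow> real \<Rightarrow> real) \<Rightarrow> real^'n \<Rightarrow> real" where
  "objF W \<alpha> f x = (1/2) * (x \<bullet> ((mat 1 - W) *v x)) + \<alpha> * (\<Sum>i\<in>UNIV. f i (x $ i))"

text \<open>Gradient g(x) = (I-W)x + alpha (f_i'(x_i))_i, with f1 i the derivative of f i.\<close>
definition gradF :: "real^'n^'n \<Rightarrow> real \<Rightarrow> ('n::finite \<Rightarrow> real \<Rightarrow> real) \<Rightarrow> real^'n \<Rightarrow> real^'n" where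
  "gradF W \<alpha> f1 x = (mat 1 - W) *v x + \<alpha> *\<^sub>R (\<chi> i. f1 i (x $ i))"

text \<open>Diagonal entries of D(x) = alpha G(x) + 2 (I - W_d), with f2 i the second derivative of f i.\<close>
definition Ddiag :: "real^'n^'n \<Rightarrow> real \<Rightarrow> ('n::finite \<Rightarrow> real \<Rightarrow> real) \<Rightarrow> real^'n \<Rightarrow> 'n \<Rightarrow> real" where
  "Ddiag W \<alpha> f2 x i = \<alpha> * f2 i (x $ i) + 2 * (1 - W $ i $ i)"

definition Dmat :: "real^'n^'n \<Rightarrow> real \<Rightarrow> ('n::finite \<Rightarrow> real \<Rightarrow> real) \<Rightarrow> real^'n \<Rightarrow> real^'n^'n" where
  "Dmat W \<alpha> f2 x = diag_mat (Ddiag W \<alpha> f2 x)"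

definition Bmat :: "real^'n^'n \<Rightarrow> real^'n^'n" where
  "Bmat W = mat 1 - 2 *\<^sub>R diag_mat (\<lambda>i. W $ i $ i) + (W :: real^'n::finite^'n)"

definition Hhat_inv :: "real^'n^'n \<Rightarrow> real \<Rightarrow> ('n::finite \<Rightarrow> real \<Rightarrow> real) \<Rightarrow> real^'n \<Rightarrow> real^'n^'n" where
  "Hhat_inv W \<alpha> f2 x =
     (let Dm = diag_mat (\<lambda>i. 1 / sqrt (Ddiag W \<alpha> f2 x i))
      in Dm ** (mat 1 + Dm ** Bmat W ** Dm) ** Dm)"

text \<open>One iteration with active agent i, i.e. Phi = e_i e_i^T:
  x' = x - eps * Phi * Hhat_inv(x) * g(x).\<close>
definition ann_step :: "real^'n^'n \<Rightarrow> real \<Rightarrow> ('n::finite \<Rightarrow> real \<Rightarrow> real) \<Rightarrow> ('n \<Rightarrow> real \<Rightarrow> real)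
     \<Rightarrow> real \<Rightarrow> real^'n \<Rightarrow> 'n \<Rightarrow> real^'n" where
  "ann_step W \<alpha> f1 f2 \<epsilon> x i =
     x - \<epsilon> *\<^sub>R (diag_mat (\<lambda>j. if j = i then 1 else 0) *v (Hhat_inv W \<alpha> f2 x *v gradF W \<alpha> f1 x))"

text \<open>Iterate along a realized sequence of active agents [i_1, ..., i_t]: gives x(t).\<close>
definition ann_iter :: "real^'n^'n \<Rightarrow> real \<Rightarrow> ('n::finite \<Rightarrow> real \<Rightarrow> real) \<Rightarrow> ('n \<Rightarrow> real \<Rightarrow> real)
     \<Rightarrow> real \<Rightarrow> real^'n \<Rightarrow> 'n list \<Rightarrow> real^'n" where
  "ann_iter W \<alpha> f1 f2 \<epsilon> x0 xs = foldl (ann_step W \<alpha> f1 f2 \<epsilon>) x0 xs"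

text \<open>Expectation of a function of (Phi(1),...,Phi(t)) when each Phi(k) independently
  selects a uniformly random agent: average over all length-t agent sequences.\<close>
definition expect_paths :: "nat \<Rightarrow> ('n::finite list \<Rightarrow> real) \<Rightarrow> real" where
  "expect_paths t h = (\<Sum>xs\<in>{xs :: 'n list. length xs = t}. h xs) / real (CARD('n)) ^ t"

definition rho_c :: "real \<Rightarrow> real \<Rightarrow> real \<Rightarrow> real" where
  "rho_c \<alpha> \<delta> m = 2 * (1 - \<delta>) / (2 * (1 - \<delta>) + \<alpha> * m)"
definition Lam_c :: "real \<Rightarrow> real \<Rightarrow> real \<Rightarrow> real \<Rightarrow> real" where
  "Lam_c \<alpha> \<delta> \<Delta> m = (1 + rho_c \<alpha> \<delta> m) / (2 * (1 - \<Delta>) + \<alpha> * m)"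
definition lam_c :: "real \<Rightarrow> real \<Rightarrow> real \<Rightarrow> real" where
  "lam_c \<alpha> \<delta> M = 1 / (2 * (1 - \<delta>) + \<alpha> * M)"
definition beta_c :: "nat \<Rightarrow> real \<Rightarrow> real \<Rightarrow> real \<Rightarrow> real \<Rightarrow> real \<Rightarrow> real \<Rightarrow> real" where
  "beta_c n \<alpha> \<delta> \<Delta> m M \<epsilon> =
     \<alpha> * m * \<epsilon> * (2 * (lam_c \<alpha> \<delta> M)\<^sup>2 - \<epsilon> * (Lam_c \<alpha> \<delta> \<Delta> m)\<^sup>2) / (real n * lam_c \<alpha> \<delta> M)"

end

theory Submission
  imports Defs
begin

lemma taylor2_bounds:
  fixes f f1 f2 :: "real \<Rightarrow> real"
  assumes d1: "\<forall>s. (f has_real_derivative f1 s) (at s)"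
    and d2: "\<forall>s. (f1 has_real_derivative f2 s) (at s)"
    and bd: "\<forall>s. m \<le> f2 s \<and> f2 s \<le> M"
  shows "m*z^2/2 \<le> f(x+z) - f x - f1 x * z \<and> f(x+z) - f x - f1 x * z \<le> M*z^2/2"
proof (cases "z = 0")
  case True then show ?thesis by simp
next
  case False
  define diff where "diff = (\<lambda>k::nat. if k = 0 then f else if k = 1 then f1 else f2)"
  have "\<exists>t. (if x+z < x then x+z < t \<and> t < x else x < t \<and> t < x+z) \<and>
    f (x+z) = (\<Sum>k<2. (diff k x / fact k) * ((x+z) - x)^k) + (diff 2 t / fact 2) * ((x+z) - x)^2"
    apply (rule Taylor[where a="min x (x+z)" and b="max x (x+z)"])
    using False d1 d2 by (auto simp: diff_def less_2_cases_iff)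
  then obtain t where "f (x+z) = f x + f1 x * z + f2 t / 2 * z^2"
    by (auto simp: diff_def numeral_2_eq_2)
  moreover have "m * z^2 \<le> f2 t * z^2" "f2 t * z^2 \<le> M * z^2"
    using bd by (auto intro: mult_right_mono)
  ultimately show ?thesis by auto
qed

lemma weighted_cs:
  fixes a b :: "'a \<Rightarrow> real"
  assumes "finite S" "\<forall>j\<in>S. 0 \<le> a j"
  shows "(\<Sum>j\<in>S. a j * b j)^2 \<le> (\<Sum>j\<in>S. a j) * (\<Sum>j\<in>S. a j * (b j)^2)"
proof -
  have "0 \<le> (\<Sum>j\<in>S. \<Sum>k\<in>S. a j * a k * (b j - b k)^2)"
    using assms by (intro sum_nonneg) auto
  also have "\<dots> = (\<Sum>j\<in>S. \<Sum>k\<in>S. a j * (b j)^2 * a k + a j * (a k * (b k)^2) - 2 * (a j * b j) * (a k * b k))"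
    by (intro sum.cong refl) (simp add: power2_eq_square algebra_simps sum_distrib_left)
  also have "\<dots> = (\<Sum>j\<in>S. a j * (b j)^2 * (\<Sum>k\<in>S. a k) + a j * (\<Sum>k\<in>S. a k * (b k)^2) - 2 * (a j * b j) * (\<Sum>k\<in>S. a k * b k))"
    by (simp add: sum.distrib sum_subtractf sum_distrib_left)
  also have "\<dots> = 2 * ((\<Sum>j\<in>S. a j) * (\<Sum>j\<in>S. a j * (b j)^2) - (\<Sum>j\<in>S. a j * b j)^2)"
    by (simp only: sum.distrib sum_subtractf mult.assoc[symmetric] sum_distrib_right[symmetric] sum_distrib_left[symmetric]) (simp add: power2_eq_square algebra_simps sum_distrib_left)
  finally show ?thesis by simp
qed

locale annl =
  fixes W :: "real^'n::finite^'n" and \<alpha> \<delta> \<Delta> m M :: real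
    and f f1 f2 :: "'n \<Rightarrow> real \<Rightarrow> real"
  assumes alpha_pos: "\<alpha> > 0"
    and W_sym: "transpose W = W"
    and W_nonneg: "\<forall>i j. 0 \<le> W $ i $ j"
    and W_lt1: "\<forall>i j. W $ i $ j < 1"
    and W_stoch: "W *v (1 :: real^'n) = 1"
    and delta_pos: "0 < \<delta>" and delta_Delta: "\<delta> \<le> \<Delta>" and Delta_lt1: "\<Delta> < 1"
    and W_diag: "\<forall>i. \<delta> \<le> W $ i $ i \<and> W $ i $ i \<le> \<Delta>"
    and f_deriv: "\<forall>i s. (f i has_real_derivative f1 i s) (at s)"
    and f1_deriv: "\<forall>i s. (f1 i has_real_derivative f2 i s) (at s)"
    and m_pos: "0 < m" and M_fin: "m \<le> M"
    and f2_bounds: "\<forall>i s. m \<le> f2 i s \<and> f2 i s \<le> M"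
begin

definition Q :: "real^'n^'n" where "Q = mat 1 - W"

lemma Wsym: "W$i$j = W$j$i"
proof -
  have "(transpose W)$i$j = W$i$j" using W_sym by simp
  then show ?thesis by (simp add: transpose_def)
qed

lemma rowsum: "(\<Sum>j\<in>UNIV. W$i$j) = 1"
proof -
  have "(W *v 1)$i = (1::real)" using W_stoch by simp
  then show ?thesis by (simp add: matrix_vector_mult_def)
qed

lemma colsum: "(\<Sum>i\<in>UNIV. W$i$j) = 1"
  using rowsum[of j] by (simp add: Wsym)

lemma Qv: "(Q *v x)$i = x$i - (\<Sum>j\<in>UNIV. W$i$j * x$j)"
  unfolding Q_def matrix_vector_mult_diff_rdistrib matrix_vector_mul_lid
  by (simp add: matrix_vector_mult_def)

lemma Q_symm: "x \<bullet> (Q *v z) = z \<bullet> (Q *v x)"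
proof -
  have tQ: "transpose Q = Q"
    by (simp add: Q_def transpose_def vec_eq_iff mat_def Wsym)
  have "x \<bullet> (Q *v z) = (x v* Q) \<bullet> z" by (simp add: dot_lmul_matrix)
  also have "x v* Q = transpose Q *v x" by simp
  finally show ?thesis using tQ by (simp add: inner_commute)
qed

lemma Q_form: "z \<bullet> (Q *v z) = (\<Sum>i\<in>UNIV. (z$i)^2) - (\<Sum>i\<in>UNIV. \<Sum>j\<in>UNIV. W$i$j * z$i * z$j)"
  by (simp add: inner_vec_def Qv right_diff_distrib sum_subtractf sum_distrib_left power2_eq_square algebra_simps)

lemma Q_psd: "0 \<le> z \<bullet> (Q *v z)"
proof -
  have "0 \<le> (\<Sum>i\<in>UNIV. \<Sum>j\<in>UNIV. W$i$j * (z$i - z$j)^2)"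
    using W_nonneg by (intro sum_nonneg mult_nonneg_nonneg) auto
  also have "\<dots> = (\<Sum>i\<in>UNIV. \<Sum>j\<in>UNIV. W$i$j * (z$i)^2) + (\<Sum>i\<in>UNIV. \<Sum>j\<in>UNIV. W$i$j * (z$j)^2)
       - 2 * (\<Sum>i\<in>UNIV. \<Sum>j\<in>UNIV. W$i$j * z$i * z$j)"
    by (simp add: sum.distrib sum_subtractf sum_distrib_left power2_eq_square algebra_simps)
  also have "(\<Sum>i\<in>UNIV. \<Sum>j\<in>UNIV. W$i$j * (z$i)^2) = (\<Sum>i\<in>UNIV. (z$i)^2)"
    by (simp add: sum_distrib_right[symmetric] rowsum)
  also have "(\<Sum>i\<in>UNIV. \<Sum>j\<in>UNIV. W$i$j * (z$j)^2) = (\<Sum>j\<in>UNIV. (z$j)^2)"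
    by (subst sum.swap) (simp add: sum_distrib_right[symmetric] colsum)
  finally show ?thesis by (simp add: Q_form)
qed

lemma F_expand:
  "objF W \<alpha> f (x + z) = objF W \<alpha> f x + gradF W \<alpha> f1 x \<bullet> z + (1/2) * (z \<bullet> (Q *v z))
     + \<alpha> * (\<Sum>i\<in>UNIV. f i (x$i + z$i) - f i (x$i) - f1 i (x$i) * z$i)"
proof -
  have q: "(x + z) \<bullet> (Q *v (x + z)) = x \<bullet> (Q *v x) + 2 * (z \<bullet> (Q *v x)) + z \<bullet> (Q *v z)"
    using Q_symm[of x z] by (simp add: matrix_vector_right_distrib inner_add_left inner_add_right)
  have gz: "gradF W \<alpha> f1 x \<bullet> z = z \<bullet> (Q *v x) + \<alpha> * (\<Sum>i\<in>UNIV. f1 i (x$i) * z$i)"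
    by (simp add: gradF_def Q_def[symmetric] inner_add_left inner_commute[of _ z] inner_vec_def sum_distrib_left sum.distrib distrib_left mult.commute mult.left_commute)
  show ?thesis
    unfolding objF_def Q_def[symmetric] q gz
    by (simp add: sum_subtractf sum.distrib algebra_simps)
qed

lemma R_bounds:
  "m*(z$i)^2/2 \<le> f i (x$i + z$i) - f i (x$i) - f1 i (x$i) * z$i \<and>
   f i (x$i + z$i) - f i (x$i) - f1 i (x$i) * z$i \<le> M*(z$i)^2/2"
  using taylor2_bounds[of "f i" "f1 i" "f2 i" m M] f_deriv f1_deriv f2_bounds by blast

lemma sc: "objF W \<alpha> f x + gradF W \<alpha> f1 x \<bullet> z + \<alpha>*m/2*(z \<bullet> z) \<le> objF W \<alpha> f (x+z)"
proof -
  have "(\<Sum>i\<in>UNIV. m*(z$i)^2/2) \<le> (\<Sum>i\<in>UNIV. f i (x$i + z$i) - f i (x$i) - f1 i (x$i) * z$i)"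
    using R_bounds by (intro sum_mono) blast
  moreover have "(\<Sum>i\<in>UNIV. m*(z$i)^2/2) = m/2 * (z \<bullet> z)"
    by (simp add: inner_vec_def sum_distrib_left power2_eq_square)
  ultimately have "\<alpha>*m/2*(z \<bullet> z) \<le> \<alpha> * (\<Sum>i\<in>UNIV. f i (x$i + z$i) - f i (x$i) - f1 i (x$i) * z$i)"
    using alpha_pos mult_left_mono[of "m/2 * (z \<bullet> z)" _ \<alpha>] by simp
  then show ?thesis using F_expand[of x z] Q_psd[of z] by linarith
qed

lemma coord: "objF W \<alpha> f (x + axis i c) \<le> objF W \<alpha> f x + c * (gradF W \<alpha> f1 x)$i + c^2/2 * (1 - W$i$i + \<alpha>*M)"
proof -
  have gz: "gradF W \<alpha> f1 x \<bullet> axis i c = c * (gradF W \<alpha> f1 x)$i" by (simp add: inner_axis)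
  have qz: "axis i c \<bullet> (Q *v axis i c) = c^2 * (1 - W$i$i)"
  proof -
    have e1: "W$k$j * axis i c$k * axis i c$j = (if k = i then (if j = i then W$i$i*c*c else 0) else 0)" for k j
      by (simp add: axis_def)
    have e2: "(axis i c$k)^2 = (if k = i then c^2 else 0)" for k
      by (simp add: axis_def)
    have e3: "(\<Sum>j\<in>UNIV. W$k$j * axis i c$k * axis i c$j) = (if k = i then W$i$i*c*c else 0)" for k
      unfolding e1 by (cases "k = i") simp_all
    show ?thesis unfolding Q_form e3 e2 by (simp add: power2_eq_square algebra_simps)
  qed
  have "(\<Sum>k\<in>UNIV. f k (x$k + axis i c$k) - f k (x$k) - f1 k (x$k) * axis i c$k)
      \<le> (\<Sum>k\<in>UNIV. if k = i then M*c^2/2 else 0)"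
  proof (intro sum_mono)
    fix k show "f k (x$k + axis i c$k) - f k (x$k) - f1 k (x$k) * axis i c$k \<le> (if k = i then M*c^2/2 else 0)"
      using R_bounds[of "axis i c" k x] by (auto simp: axis_def)
  qed
  also have "\<dots> = M*c^2/2" by simp
  finally have "\<alpha> * (\<Sum>k\<in>UNIV. f k (x$k + axis i c$k) - f k (x$k) - f1 k (x$k) * axis i c$k) \<le> \<alpha> * (M*c^2/2)"
    using alpha_pos by (intro mult_left_mono) auto
  then show ?thesis using F_expand[of x "axis i c"] gz qz by (simp add: algebra_simps)
qed

lemma grad_zero:
  assumes min: "\<forall>x. objF W \<alpha> f xs \<le> objF W \<alpha> f x"
  shows "gradF W \<alpha> f1 xs = 0"
proof -
  have "(gradF W \<alpha> f1 xs)$i = 0" for i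
  proof -
    define K where "K = 1 - W$i$i + \<alpha>*M"
    define gi where "gi = (gradF W \<alpha> f1 xs)$i"
    have "\<alpha> * M > 0" using alpha_pos m_pos M_fin by simp
    moreover have "W$i$i < 1" using W_lt1 by blast
    ultimately have Kp: "K > 0" unfolding K_def by linarith
    have "0 \<le> c * gi + c^2/2 * K" for c
    proof -
      have "objF W \<alpha> f xs \<le> objF W \<alpha> f (xs + axis i c)" using min by blast
      then show ?thesis using coord[of xs i c] unfolding K_def gi_def by linarith
    qed
    from this[of "- gi / K"] Kp have "0 \<le> -(gi^2)/(2*K)"
      by (simp add: power2_eq_square field_simps)
    then have "gi^2 \<le> 0" using Kp by (simp add: divide_le_0_iff)
    then show ?thesis unfolding gi_def by simp
  qed
  then show ?thesis by (simp add: vec_eq_iff)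
qed

lemma dist_bound:
  assumes min: "\<forall>x. objF W \<alpha> f xs \<le> objF W \<alpha> f x"
  shows "\<alpha>*m/2 * ((x - xs) \<bullet> (x - xs)) \<le> objF W \<alpha> f x - objF W \<alpha> f xs"
  using sc[of xs "x - xs"] grad_zero[OF min] by simp

lemma PL:
  assumes min: "\<forall>x. objF W \<alpha> f xs \<le> objF W \<alpha> f x"
  shows "2*\<alpha>*m * (objF W \<alpha> f x - objF W \<alpha> f xs) \<le> gradF W \<alpha> f1 x \<bullet> gradF W \<alpha> f1 x"
proof -
  define c where "c = \<alpha>*m"
  have cp: "c > 0" using alpha_pos m_pos by (simp add: c_def)
  define gg where "gg = gradF W \<alpha> f1 x"
  define z where "z = xs - x"
  have "0 \<le> (gg + c *\<^sub>R z) \<bullet> (gg + c *\<^sub>R z)" by simp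
  also have "\<dots> = gg \<bullet> gg + 2*c*(gg \<bullet> z) + c^2 * (z \<bullet> z)"
    by (simp add: inner_add_left inner_add_right inner_commute power2_eq_square algebra_simps)
  finally have "- (gg \<bullet> gg) \<le> 2*c*(gg \<bullet> z + c/2 * (z \<bullet> z))"
    by (simp add: power2_eq_square algebra_simps)
  moreover have "objF W \<alpha> f x + gg \<bullet> z + c/2*(z \<bullet> z) \<le> objF W \<alpha> f xs"
    using sc[of x z] unfolding c_def gg_def z_def by simp
  ultimately have "- (gg \<bullet> gg) \<le> 2*c*(objF W \<alpha> f xs - objF W \<alpha> f x)"
    using cp by (smt (verit) mult_left_mono)
  then show ?thesis unfolding c_def gg_def by (simp add: algebra_simps)
qed

end

lemma diag_mv: "diag_mat d *v v = (\<chi> i. d i * v$i)"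
proof -
  have "(\<Sum>j\<in>UNIV. (if i = j then d i else 0) * v$j) = (\<Sum>j\<in>UNIV. if i = j then d i * v$i else 0)" for i
    by (rule sum.cong) auto
  then have "(\<Sum>j\<in>UNIV. (if i = j then d i else 0) * v$j) = d i * v$i" for i by simp
  then show ?thesis by (simp add: diag_mat_def matrix_vector_mult_def vec_eq_iff)
qed

context annl begin

definition bb where "bb i j = Bmat W $ i $ j"
definition m0 where "m0 = 2*(1-\<Delta>) + \<alpha>*m"
definition rho where "rho = rho_c \<alpha> \<delta> m"
definition lam where "lam = lam_c \<alpha> \<delta> M"
definition Lam where "Lam = Lam_c \<alpha> \<delta> \<Delta> m"

lemma bb_eq: "bb i j = W$i$j + (if i = j then 1 - 2*W$i$i else 0)"
  by (simp add: bb_def Bmat_def diag_mat_def mat_def)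

lemma bb_nonneg: "0 \<le> bb i j"
proof (cases "i = j")
  case True then show ?thesis using W_lt1[rule_format, of i i] by (simp add: bb_eq)
next
  case False then show ?thesis using W_nonneg by (simp add: bb_eq)
qed

lemma bb_sym: "bb i j = bb j i"
  by (auto simp: bb_eq Wsym)

lemma bb_rowsum: "(\<Sum>j\<in>UNIV. bb i j) = 2*(1 - W$i$i)"
  by (simp add: bb_eq sum.distrib rowsum)

lemma bb_colsum: "(\<Sum>i\<in>UNIV. bb i j) = 2*(1 - W$j$j)"
  using bb_rowsum[of j] by (simp add: bb_sym)

lemma B_psd: "0 \<le> (\<Sum>i\<in>UNIV. u i * (\<Sum>j\<in>UNIV. bb i j * u j))"
proof -
  have a: "(\<Sum>i\<in>UNIV. u i * (\<Sum>j\<in>UNIV. bb i j * u j))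
      = (\<Sum>i\<in>UNIV. \<Sum>j\<in>UNIV. W$i$j * u i * u j) + (\<Sum>i\<in>UNIV. (1 - 2*W$i$i) * (u i)^2)"
  proof -
    have r: "(\<Sum>j\<in>UNIV. bb i j * u j) = (\<Sum>j\<in>UNIV. W$i$j * u j) + (1 - 2*W$i$i) * u i" for i
    proof -
      have "(\<Sum>j\<in>UNIV. bb i j * u j) = (\<Sum>j\<in>UNIV. W$i$j * u j + (if i = j then (1 - 2*W$i$i) * u i else 0))"
        by (rule sum.cong) (auto simp: bb_eq distrib_right)
      then show ?thesis by (simp add: sum.distrib)
    qed
    have "(\<Sum>i\<in>UNIV. u i * ((\<Sum>j\<in>UNIV. W$i$j * u j) + (1 - 2*W$i$i) * u i))
       = (\<Sum>i\<in>UNIV. (\<Sum>j\<in>UNIV. W$i$j * u i * u j) + (1 - 2*W$i$i) * (u i)^2)"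
      by (rule sum.cong) (simp_all add: distrib_left sum_distrib_left power2_eq_square mult_ac)
    then show ?thesis unfolding r by (simp add: sum.distrib)
  qed
  have b: "(\<Sum>i\<in>UNIV. \<Sum>j\<in>UNIV. W$i$j * (u i + u j)^2)
      = 2*(\<Sum>i\<in>UNIV. (u i)^2) + 2*(\<Sum>i\<in>UNIV. \<Sum>j\<in>UNIV. W$i$j * u i * u j)"
  proof -
    have "(\<Sum>i\<in>UNIV. \<Sum>j\<in>UNIV. W$i$j * (u i + u j)^2)
        = (\<Sum>i\<in>UNIV. \<Sum>j\<in>UNIV. W$i$j * (u i)^2) + (\<Sum>i\<in>UNIV. \<Sum>j\<in>UNIV. W$i$j * (u j)^2)
          + 2 * (\<Sum>i\<in>UNIV. \<Sum>j\<in>UNIV. W$i$j * u i * u j)"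
      by (simp add: sum.distrib sum_distrib_left power2_eq_square algebra_simps)
    also have "(\<Sum>i\<in>UNIV. \<Sum>j\<in>UNIV. W$i$j * (u i)^2) = (\<Sum>i\<in>UNIV. (u i)^2)"
      by (simp add: sum_distrib_right[symmetric] rowsum)
    also have "(\<Sum>i\<in>UNIV. \<Sum>j\<in>UNIV. W$i$j * (u j)^2) = (\<Sum>j\<in>UNIV. (u j)^2)"
      by (subst sum.swap) (simp add: sum_distrib_right[symmetric] colsum)
    finally show ?thesis by linarith
  qed
  have c: "(\<Sum>i\<in>UNIV. W$i$i * (2 * u i)^2) \<le> (\<Sum>i\<in>UNIV. \<Sum>j\<in>UNIV. W$i$j * (u i + u j)^2)"
  proof (rule sum_mono)
    fix i
    have "W$i$i * (u i + u i)^2 \<le> (\<Sum>j\<in>UNIV. W$i$j * (u i + u j)^2)"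
      by (rule member_le_sum[of i UNIV "\<lambda>j. W$i$j * (u i + u j)^2"]) (use W_nonneg in auto)
    then show "W$i$i * (2 * u i)^2 \<le> (\<Sum>j\<in>UNIV. W$i$j * (u i + u j)^2)" by (simp only: mult_2)
  qed
  have "(\<Sum>i\<in>UNIV. W$i$i * (2 * u i)^2) = 4 * (\<Sum>i\<in>UNIV. W$i$i * (u i)^2)"
    by (simp add: sum_distrib_left power2_eq_square algebra_simps)
  moreover have "(\<Sum>i\<in>UNIV. (1 - 2*W$i$i) * (u i)^2) = (\<Sum>i\<in>UNIV. (u i)^2) - 2*(\<Sum>i\<in>UNIV. W$i$i * (u i)^2)"
    by (simp add: left_diff_distrib sum_subtractf sum_distrib_left algebra_simps)
  ultimately show ?thesis using a b c by linarith
qed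

lemma D_bounds: "m0 \<le> Ddiag W \<alpha> f2 x i \<and> Ddiag W \<alpha> f2 x i \<le> 2*(1-\<delta>) + \<alpha>*M
   \<and> 2*(1 - W$i$i) + \<alpha>*m \<le> Ddiag W \<alpha> f2 x i"
proof -
  have "\<alpha>*m \<le> \<alpha> * f2 i (x$i)" "\<alpha> * f2 i (x$i) \<le> \<alpha>*M"
    using f2_bounds alpha_pos by (auto intro: mult_left_mono)
  then show ?thesis using W_diag[rule_format, of i] by (auto simp: Ddiag_def m0_def)
qed

lemma m0_pos: "m0 > 0"
proof -
  have "\<alpha>*m > 0" by (simp add: alpha_pos m_pos)
  then show ?thesis using Delta_lt1 unfolding m0_def by (smt (verit))
qed

lemma D_pos: "Ddiag W \<alpha> f2 x i > 0"
  using D_bounds m0_pos by (meson less_le_trans)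

lemma Hv: "(Hhat_inv W \<alpha> f2 x *v v)$i = v$i / Ddiag W \<alpha> f2 x i
      + (\<Sum>j\<in>UNIV. bb i j * (v$j / Ddiag W \<alpha> f2 x j)) / Ddiag W \<alpha> f2 x i"
proof -
  define d where "d = Ddiag W \<alpha> f2 x"
  define Dm where "Dm = diag_mat (\<lambda>i. 1 / sqrt (d i))"
  have sq: "sqrt (d k) * sqrt (d k) = d k" for k using D_pos[of x k] by (simp add: d_def)
  have e: "Hhat_inv W \<alpha> f2 x *v v = Dm *v (Dm *v v + Dm *v (Bmat W *v (Dm *v (Dm *v v))))"
    unfolding Hhat_inv_def Let_def d_def[symmetric] Dm_def[symmetric]
    by (simp only: matrix_vector_mul_assoc[symmetric] matrix_vector_mult_add_rdistrib matrix_vector_mul_lid)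
  have sq2: "1 / sqrt (d k) * (1 / sqrt (d k) * a) = a / d k" for k a
  proof -
    have "1 / sqrt (d k) * (1 / sqrt (d k) * a) = a / (sqrt (d k) * sqrt (d k))" by simp
    then show ?thesis unfolding sq .
  qed
  have dp: "\<bar>d k\<bar> = d k" for k using D_pos[of x k] by (simp add: d_def)
  have f: "Dm *v (Dm *v w) = (\<chi> k. w$k / d k)" for w
    by (simp add: Dm_def diag_mv vec_eq_iff sq2 dp)
  show ?thesis
    unfolding e d_def[symmetric] matrix_vector_right_distrib f
    by (simp add: Dm_def diag_mv matrix_vector_mult_def bb_def sq2 dp add_divide_distrib distrib_left)
qed

end

lemma norm_sq_vec: "(norm (x::real^'n))^2 = (\<Sum>i\<in>UNIV. (x$i)^2)"
  unfolding power2_norm_eq_inner inner_vec_def by (simp add: power2_eq_square)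

context annl begin

lemma Lam_eq: "Lam = (1 + rho) / m0"
  by (simp add: Lam_def Lam_c_def rho_def m0_def)

lemma lam_eq: "lam = 1 / (2*(1-\<delta>) + \<alpha>*M)"
  by (simp add: lam_def lam_c_def)

lemma rho_nonneg: "0 \<le> rho"
proof -
  have "\<alpha>*m > 0" by (simp add: alpha_pos m_pos)
  then show ?thesis using delta_Delta Delta_lt1 by (simp add: rho_def rho_c_def)
qed

lemma ratio_le_rho: "2*(1 - W$i$i) / Ddiag W \<alpha> f2 x i \<le> rho"
proof -
  define a where "a = 2*(1 - W$i$i)"
  define b where "b = 2*(1 - \<delta>)"
  define c where "c = \<alpha>*m"
  have cp: "c > 0" by (simp add: c_def alpha_pos m_pos)
  have a0: "0 \<le> a" using W_lt1[rule_format, of i i] by (simp add: a_def)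
  have ab: "a \<le> b" using W_diag[rule_format, of i] by (simp add: a_def b_def)
  have D: "a + c \<le> Ddiag W \<alpha> f2 x i" using D_bounds[of x i] by (simp add: a_def c_def)
  have "a / Ddiag W \<alpha> f2 x i \<le> a / (a + c)"
    using D a0 cp by (intro divide_left_mono) auto
  also have "a / (a + c) \<le> b / (b + c)"
  proof -
    have "a * c \<le> b * c" using ab cp by (intro mult_right_mono) auto
    then have "a * (b + c) \<le> b * (a + c)" by (simp add: algebra_simps)
    then show ?thesis using a0 ab cp by (simp add: divide_simps)
  qed
  finally show ?thesis by (simp add: a_def b_def c_def rho_def rho_c_def)
qed

lemma Dmax_pos: "0 < 2*(1-\<delta>) + \<alpha>*M"
  using D_bounds[of x i] D_pos[of x i] by linarith

lemma K1: "lam * (v \<bullet> v) \<le> v \<bullet> (Hhat_inv W \<alpha> f2 x *v v)"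
proof -
  define d where "d = Ddiag W \<alpha> f2 x"
  have dp: "d i > 0" for i using D_pos by (simp add: d_def)
  define u where "u i = v$i / d i" for i
  have e: "v \<bullet> (Hhat_inv W \<alpha> f2 x *v v) = (\<Sum>i\<in>UNIV. (v$i)^2 / d i) + (\<Sum>i\<in>UNIV. u i * (\<Sum>j\<in>UNIV. bb i j * u j))"
  proof -
    have "v \<bullet> (Hhat_inv W \<alpha> f2 x *v v) = (\<Sum>i\<in>UNIV. (v$i)^2 / d i + u i * (\<Sum>j\<in>UNIV. bb i j * u j))"
      unfolding inner_vec_def
      by (rule sum.cong) (simp_all add: Hv d_def[symmetric] u_def power2_eq_square distrib_left)
    then show ?thesis by (simp add: sum.distrib)
  qed
  have "lam * (v \<bullet> v) = (\<Sum>i\<in>UNIV. (v$i)^2 / (2*(1-\<delta>) + \<alpha>*M))"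
    by (simp add: lam_eq inner_vec_def sum_divide_distrib power2_eq_square)
  also have "\<dots> \<le> (\<Sum>i\<in>UNIV. (v$i)^2 / d i)"
  proof (intro sum_mono divide_left_mono)
    fix i
    show "d i \<le> 2*(1-\<delta>) + \<alpha>*M" using D_bounds by (simp add: d_def)
    show "0 \<le> (v$i)^2" by simp
    show "0 < (2*(1-\<delta>) + \<alpha>*M) * d i" using Dmax_pos dp[of i] by simp
  qed
  finally show ?thesis using e B_psd[of u] by linarith
qed

lemma K2: "(Hhat_inv W \<alpha> f2 x *v v) \<bullet> (Hhat_inv W \<alpha> f2 x *v v) \<le> Lam^2 * (v \<bullet> v)"
proof -
  define d where "d = Ddiag W \<alpha> f2 x"
  have dp: "d i > 0" for i using D_pos by (simp add: d_def)
  have dm: "m0 \<le> d i" for i using D_bounds by (simp add: d_def)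
  define u where "u i = v$i / d i" for i
  define uv where "uv = (\<chi> i. u i)"
  define rv where "rv = (\<chi> i. (\<Sum>j\<in>UNIV. bb i j * u j) / d i)"
  have hv: "Hhat_inv W \<alpha> f2 x *v v = uv + rv"
    by (simp add: vec_eq_iff Hv uv_def rv_def u_def d_def)
  have m0p: "m0 > 0" by (rule m0_pos)
  have nu: "norm uv \<le> norm v / m0"
  proof -
    have "(norm uv)^2 = (\<Sum>i\<in>UNIV. (v$i)^2 / (d i)^2)"
      by (simp add: norm_sq_vec uv_def u_def power_divide)
    also have "\<dots> \<le> (\<Sum>i\<in>UNIV. (v$i)^2 / m0^2)"
    proof (intro sum_mono divide_left_mono)
      fix i
      show "m0^2 \<le> (d i)^2" using dm[of i] m0p by (intro power_mono) auto
      show "0 \<le> (v$i)^2" by simp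
      show "0 < (d i)^2 * m0^2" using dp[of i] m0p by simp
    qed
    also have "\<dots> = (norm v / m0)^2"
      by (simp only: power_divide norm_sq_vec sum_divide_distrib)
    finally have h: "(norm uv)^2 \<le> (norm v / m0)^2" .
    show ?thesis by (rule power2_le_imp_le[OF h]) (use m0p in simp)
  qed
  have nr: "norm rv \<le> rho / m0 * norm v"
  proof -
    have t: "((\<Sum>j\<in>UNIV. bb i j * u j) / d i)^2 \<le> rho / m0 * (\<Sum>j\<in>UNIV. bb i j * (u j)^2)" for i
    proof -
      have cs: "(\<Sum>j\<in>UNIV. bb i j * u j)^2 \<le> 2*(1 - W$i$i) * (\<Sum>j\<in>UNIV. bb i j * (u j)^2)"
        using weighted_cs[of UNIV "bb i" u] bb_nonneg bb_rowsum[of i] by simp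
      have S0: "0 \<le> (\<Sum>j\<in>UNIV. bb i j * (u j)^2)" using bb_nonneg by (intro sum_nonneg) auto
      have r1: "2*(1 - W$i$i) / d i \<le> rho" using ratio_le_rho by (simp add: d_def)
      have r0: "0 \<le> 2*(1 - W$i$i)" using W_lt1[rule_format, of i i] by simp
      have "2*(1 - W$i$i) / (d i)^2 = (2*(1 - W$i$i) / d i) * (1 / d i)"
        by (simp add: power2_eq_square)
      also have "\<dots> \<le> rho * (1 / m0)"
        using r1 r0 dp[of i] dm[of i] m0p rho_nonneg by (intro mult_mono divide_left_mono) auto
      finally have r2: "2*(1 - W$i$i) / (d i)^2 \<le> rho / m0" by simp
      have "((\<Sum>j\<in>UNIV. bb i j * u j) / d i)^2 = (\<Sum>j\<in>UNIV. bb i j * u j)^2 / (d i)^2"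
        by (simp add: power_divide)
      also have "\<dots> \<le> 2*(1 - W$i$i) * (\<Sum>j\<in>UNIV. bb i j * (u j)^2) / (d i)^2"
        using cs dp by (intro divide_right_mono) auto
      also have "\<dots> = (2*(1 - W$i$i) / (d i)^2) * (\<Sum>j\<in>UNIV. bb i j * (u j)^2)" by simp
      also have "\<dots> \<le> rho / m0 * (\<Sum>j\<in>UNIV. bb i j * (u j)^2)"
        using r2 S0 by (intro mult_right_mono) auto
      finally show ?thesis .
    qed
    have t2: "2*(1 - W$j$j) * (u j)^2 \<le> rho / m0 * (v$j)^2" for j
    proof -
      have r1: "2*(1 - W$j$j) / d j \<le> rho" using ratio_le_rho by (simp add: d_def)
      have r0: "0 \<le> 2*(1 - W$j$j)" using W_lt1[rule_format, of j j] by simp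
      have "2*(1 - W$j$j) * (u j)^2 = (2*(1 - W$j$j) / d j) * (1 / d j) * (v$j)^2"
        by (simp add: u_def power2_eq_square)
      also have "\<dots> \<le> rho * (1 / m0) * (v$j)^2"
        using r1 r0 dp[of j] dm[of j] m0p rho_nonneg by (intro mult_right_mono mult_mono divide_left_mono) auto
      finally show ?thesis by simp
    qed
    have "(norm rv)^2 = (\<Sum>i\<in>UNIV. ((\<Sum>j\<in>UNIV. bb i j * u j) / d i)^2)"
      by (simp add: norm_sq_vec rv_def)
    also have "\<dots> \<le> (\<Sum>i\<in>UNIV. rho / m0 * (\<Sum>j\<in>UNIV. bb i j * (u j)^2))"
      by (intro sum_mono t)
    also have "\<dots> = rho / m0 * (\<Sum>i\<in>UNIV. \<Sum>j\<in>UNIV. bb i j * (u j)^2)"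
      by (simp add: sum_distrib_left)
    also have "(\<Sum>i\<in>UNIV. \<Sum>j\<in>UNIV. bb i j * (u j)^2) = (\<Sum>j\<in>UNIV. (\<Sum>i\<in>UNIV. bb i j) * (u j)^2)"
      by (subst sum.swap) (simp add: sum_distrib_right)
    also have "rho / m0 * (\<Sum>j\<in>UNIV. (\<Sum>i\<in>UNIV. bb i j) * (u j)^2) = rho / m0 * (\<Sum>j\<in>UNIV. 2*(1 - W$j$j) * (u j)^2)"
      by (simp add: bb_colsum)
    also have "\<dots> \<le> rho / m0 * (\<Sum>j\<in>UNIV. rho / m0 * (v$j)^2)"
      using rho_nonneg m0p by (intro mult_left_mono sum_mono t2) auto
    also have "\<dots> = (rho / m0 * norm v)^2"
      by (simp only: power_mult_distrib norm_sq_vec sum_distrib_left) (simp add: power2_eq_square mult.assoc)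
    finally have h: "(norm rv)^2 \<le> (rho / m0 * norm v)^2" .
    show ?thesis by (rule power2_le_imp_le[OF h]) (use m0p rho_nonneg in simp)
  qed
  have "norm (uv + rv) \<le> norm v / m0 + rho / m0 * norm v"
    using norm_triangle_ineq[of uv rv] nu nr by linarith
  also have "\<dots> = Lam * norm v" by (simp add: Lam_eq add_divide_distrib algebra_simps)
  finally have "norm (Hhat_inv W \<alpha> f2 x *v v) \<le> Lam * norm v" using hv by simp
  then have "(norm (Hhat_inv W \<alpha> f2 x *v v))^2 \<le> (Lam * norm v)^2"
    by (intro power_mono) auto
  then show ?thesis unfolding dot_square_norm by (simp only: power_mult_distrib)
qed

end

lemma lists_len_eq: "{xs :: 'n::finite list. length xs = t} = {xs. set xs \<subseteq> UNIV \<and> length xs = t}"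
  by simp

lemma finite_lists_t: "finite {xs :: 'n::finite list. length xs = t}"
  unfolding lists_len_eq by (rule finite_lists_length_eq) simp

lemma card_lists_t: "card {xs :: 'n::finite list. length xs = t} = CARD('n) ^ t"
  unfolding lists_len_eq by (rule card_lists_length_eq) simp

lemma lists_Suc: "{xs :: 'n::finite list. length xs = Suc t}
   = (\<lambda>p. fst p @ [snd p]) ` ({xs. length xs = t} \<times> UNIV)"
proof
  show "{xs :: 'n list. length xs = Suc t} \<subseteq> (\<lambda>p. fst p @ [snd p]) ` ({xs. length xs = t} \<times> UNIV)"
  proof
    fix xs :: "'n list" assume "xs \<in> {xs. length xs = Suc t}"
    then have l: "length xs = Suc t" by simp
    then have ne: "xs \<noteq> []" by auto
    have "xs = (\<lambda>p. fst p @ [snd p]) (butlast xs, last xs)" using ne by simp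
    moreover have "(butlast xs, last xs) \<in> {xs. length xs = t} \<times> UNIV" using l by simp
    ultimately show "xs \<in> (\<lambda>p. fst p @ [snd p]) ` ({xs. length xs = t} \<times> UNIV)" by blast
  qed
qed auto

lemma expect_Suc: "expect_paths (Suc t) (h :: 'n::finite list \<Rightarrow> real)
   = expect_paths t (\<lambda>xs. (\<Sum>i\<in>UNIV. h (xs @ [i])) / real CARD('n))"
proof -
  have inj: "inj_on (\<lambda>p. fst p @ [snd p]) ({xs :: 'n list. length xs = t} \<times> UNIV)"
    by (auto simp: inj_on_def)
  have "(\<Sum>xs\<in>{xs :: 'n list. length xs = Suc t}. h xs) = (\<Sum>p\<in>{xs :: 'n list. length xs = t} \<times> UNIV. h (fst p @ [snd p]))"
    unfolding lists_Suc by (subst sum.reindex[OF inj]) simp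
  also have "\<dots> = (\<Sum>xs\<in>{xs :: 'n list. length xs = t}. \<Sum>i\<in>UNIV. h (xs @ [i]))"
    by (simp add: sum.cartesian_product split_beta)
  finally have e: "(\<Sum>xs\<in>{xs :: 'n list. length xs = Suc t}. h xs) = (\<Sum>xs\<in>{xs :: 'n list. length xs = t}. \<Sum>i\<in>UNIV. h (xs @ [i]))" .
  show ?thesis
    unfolding expect_paths_def e by (simp add: sum_divide_distrib[symmetric] divide_divide_eq_left mult.commute)
qed

lemma expect_0: "expect_paths 0 (h :: 'n::finite list \<Rightarrow> real) = h []"
proof -
  have "{xs :: 'n list. length xs = 0} = {[]}" by auto
  then show ?thesis by (simp add: expect_paths_def)
qed

lemma expect_mono: "(\<And>xs. length xs = t \<Longrightarrow> h xs \<le> h' xs) \<Longrightarrow> expect_paths t (h :: 'n::finite list \<Rightarrow> real) \<le> expect_paths t h'"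
  unfolding expect_paths_def by (intro divide_right_mono sum_mono) auto

lemma expect_scale: "expect_paths t (\<lambda>xs. c * (h :: 'n::finite list \<Rightarrow> real) xs) = c * expect_paths t h"
  unfolding expect_paths_def by (simp add: sum_distrib_left)

lemma expect_sqrt:
  assumes "\<And>xs. length xs = t \<Longrightarrow> 0 \<le> (h :: 'n::finite list \<Rightarrow> real) xs"
  shows "expect_paths t (\<lambda>xs. sqrt (h xs)) \<le> sqrt (expect_paths t h)"
proof -
  define S where "S = {xs :: 'n list. length xs = t}"
  define N where "N = real (CARD('n)) ^ t"
  have N: "real (card S) = N" by (simp add: S_def N_def card_lists_t)
  have Np: "N > 0" by (simp add: N_def)
  have cs: "(\<Sum>xs\<in>S. sqrt (h xs))^2 \<le> N * (\<Sum>xs\<in>S. h xs)"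
  proof -
    have "(\<Sum>xs\<in>S. 1 * sqrt (h xs))^2 \<le> (\<Sum>xs\<in>S. 1) * (\<Sum>xs\<in>S. 1 * (sqrt (h xs))^2)"
      by (rule weighted_cs) (simp_all add: S_def finite_lists_t)
    also have "(\<Sum>xs\<in>S. 1 * (sqrt (h xs))^2) = (\<Sum>xs\<in>S. h xs)"
      using assms by (intro sum.cong) (auto simp: S_def)
    finally show ?thesis using N by simp
  qed
  have "(expect_paths t (\<lambda>xs. sqrt (h xs)))^2 = (\<Sum>xs\<in>S. sqrt (h xs))^2 / N^2"
    by (simp add: expect_paths_def S_def N_def power_divide)
  also have "\<dots> \<le> N * (\<Sum>xs\<in>S. h xs) / N^2"
    using cs Np by (intro divide_right_mono) auto
  also have "\<dots> = expect_paths t h"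
    using Np by (simp add: expect_paths_def S_def N_def[symmetric] power2_eq_square)
  finally show ?thesis by (rule real_le_rsqrt)
qed

context annl begin

lemma step_eq: "ann_step W \<alpha> f1 f2 \<epsilon> x i = x + axis i (-(\<epsilon> * (Hhat_inv W \<alpha> f2 x *v gradF W \<alpha> f1 x)$i))"
  by (simp add: ann_step_def diag_mv vec_eq_iff axis_def)

lemma step_bound:
  "objF W \<alpha> f (ann_step W \<alpha> f1 f2 \<epsilon> x i) \<le> objF W \<alpha> f x
     - \<epsilon> * ((gradF W \<alpha> f1 x)$i * (Hhat_inv W \<alpha> f2 x *v gradF W \<alpha> f1 x)$i)
     + \<epsilon>^2/2 * (2*(1-\<delta>) + \<alpha>*M) * ((Hhat_inv W \<alpha> f2 x *v gradF W \<alpha> f1 x)$i)^2"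
proof -
  define gi where "gi = (gradF W \<alpha> f1 x)$i"
  define hi where "hi = (Hhat_inv W \<alpha> f2 x *v gradF W \<alpha> f1 x)$i"
  have K: "1 - W$i$i + \<alpha>*M \<le> 2*(1-\<delta>) + \<alpha>*M"
  proof -
    have "\<delta> \<le> W$i$i" using W_diag by blast
    then show ?thesis using delta_Delta Delta_lt1 by (smt (verit))
  qed
  have "(-(\<epsilon> * hi))^2/2 * (1 - W$i$i + \<alpha>*M) \<le> (-(\<epsilon> * hi))^2/2 * (2*(1-\<delta>) + \<alpha>*M)"
    using K by (intro mult_left_mono) auto
  then have h2: "\<epsilon>^2 * hi^2/2 * (1 - W$i$i + \<alpha>*M) \<le> \<epsilon>^2/2 * (2*(1-\<delta>) + \<alpha>*M) * hi^2"
    by (simp add: power_mult_distrib mult_ac)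
  have h1: "objF W \<alpha> f (x + axis i (-(\<epsilon> * hi))) \<le> objF W \<alpha> f x - \<epsilon> * (gi * hi) + \<epsilon>^2 * hi^2/2 * (1 - W$i$i + \<alpha>*M)"
    using coord[of x i "-(\<epsilon> * hi)"] unfolding gi_def[symmetric] by (simp add: power_mult_distrib mult_ac)
  show ?thesis unfolding step_eq gi_def[symmetric] hi_def[symmetric]
    using h1 h2 by linarith
qed

lemma lam_pos: "lam > 0"
  using Dmax_pos by (simp add: lam_eq)

lemma Lam_pos: "Lam > 0"
  using rho_nonneg m0_pos by (simp add: Lam_eq)

lemma avg_bound:
  assumes ep: "\<epsilon> \<ge> 0"
  shows "(\<Sum>i\<in>UNIV. objF W \<alpha> f (ann_step W \<alpha> f1 f2 \<epsilon> x i))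
     \<le> real CARD('n) * objF W \<alpha> f x - \<epsilon> * (lam - \<epsilon> * Lam^2 / (2*lam)) * (gradF W \<alpha> f1 x \<bullet> gradF W \<alpha> f1 x)"
proof -
  define gv where "gv = gradF W \<alpha> f1 x"
  define hv where "hv = Hhat_inv W \<alpha> f2 x *v gv"
  define K where "K = 2*(1-\<delta>) + \<alpha>*M"
  have Klam: "K = 1 / lam" by (simp add: K_def lam_eq)
  have Kp: "K > 0" using Dmax_pos by (simp add: K_def)
  have "(\<Sum>i\<in>UNIV. objF W \<alpha> f (ann_step W \<alpha> f1 f2 \<epsilon> x i))
      \<le> (\<Sum>i\<in>UNIV. objF W \<alpha> f x - \<epsilon> * (gv$i * hv$i) + \<epsilon>^2/2 * K * (hv$i)^2)"
    unfolding gv_def hv_def K_def by (intro sum_mono step_bound)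
  also have "\<dots> = real CARD('n) * objF W \<alpha> f x - \<epsilon> * (gv \<bullet> hv) + \<epsilon>^2/2 * K * (hv \<bullet> hv)"
    by (simp add: sum.distrib sum_subtractf sum_distrib_left inner_vec_def power2_eq_square)
  also have "\<dots> \<le> real CARD('n) * objF W \<alpha> f x - \<epsilon> * (lam * (gv \<bullet> gv)) + \<epsilon>^2/2 * K * (Lam^2 * (gv \<bullet> gv))"
  proof -
    have "\<epsilon> * (lam * (gv \<bullet> gv)) \<le> \<epsilon> * (gv \<bullet> hv)"
      using K1[of gv x] ep unfolding hv_def by (intro mult_left_mono) auto
    moreover have "\<epsilon>^2/2 * K * (hv \<bullet> hv) \<le> \<epsilon>^2/2 * K * (Lam^2 * (gv \<bullet> gv))"
      using K2[of x gv] Kp unfolding hv_def by (intro mult_left_mono) auto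
    ultimately show ?thesis by linarith
  qed
  also have "\<dots> = real CARD('n) * objF W \<alpha> f x - \<epsilon> * (lam - \<epsilon> * Lam^2 / (2*lam)) * (gv \<bullet> gv)"
    using lam_pos unfolding Klam by (simp add: field_simps power2_eq_square)
  finally show ?thesis unfolding gv_def .
qed

lemma contraction:
  assumes min: "\<forall>x. objF W \<alpha> f xs \<le> objF W \<alpha> f x"
    and ep: "0 < \<epsilon>" and es: "\<epsilon> * Lam^2 < 2 * lam^2"
  shows "(\<Sum>i\<in>UNIV. objF W \<alpha> f (ann_step W \<alpha> f1 f2 \<epsilon> x i) - objF W \<alpha> f xs) / real CARD('n)
      \<le> (1 - beta_c CARD('n) \<alpha> \<delta> \<Delta> m M \<epsilon>) * (objF W \<alpha> f x - objF W \<alpha> f xs)"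
proof -
  define n where "n = real CARD('n)"
  have np: "n > 0" by (simp add: n_def)
  define c where "c = \<epsilon> * (lam - \<epsilon> * Lam^2 / (2*lam))"
  have lp: "lam > 0" by (rule lam_pos)
  have "\<epsilon> * Lam^2 / (2*lam) < lam" using es lp by (simp add: divide_less_eq power2_eq_square)
  then have cp: "c \<ge> 0" using ep by (simp add: c_def)
  define gg where "gg = gradF W \<alpha> f1 x \<bullet> gradF W \<alpha> f1 x"
  define e where "e = objF W \<alpha> f x - objF W \<alpha> f xs"
  have pl: "2*\<alpha>*m * e \<le> gg" using PL[OF min, of x] by (simp add: e_def gg_def)
  have "(\<Sum>i\<in>UNIV. objF W \<alpha> f (ann_step W \<alpha> f1 f2 \<epsilon> x i) - objF W \<alpha> f xs)
      = (\<Sum>i\<in>UNIV. objF W \<alpha> f (ann_step W \<alpha> f1 f2 \<epsilon> x i)) - n * objF W \<alpha> f xs"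
    by (simp add: sum_subtractf n_def)
  also have "\<dots> \<le> n * objF W \<alpha> f x - c * gg - n * objF W \<alpha> f xs"
    using avg_bound[of \<epsilon> x] ep by (simp add: n_def c_def gg_def)
  also have "\<dots> \<le> n * e - c * (2*\<alpha>*m * e)"
    using mult_left_mono[OF pl cp] by (simp add: e_def algebra_simps)
  finally have s: "(\<Sum>i\<in>UNIV. objF W \<alpha> f (ann_step W \<alpha> f1 f2 \<epsilon> x i) - objF W \<alpha> f xs) \<le> n * e - c * (2*\<alpha>*m * e)" .
  have beta: "beta_c CARD('n) \<alpha> \<delta> \<Delta> m M \<epsilon> = 2*\<alpha>*m*c / n"
    using lp unfolding beta_c_def lam_def[symmetric] Lam_def[symmetric] c_def n_def
    by (simp add: field_simps power2_eq_square)
  have "(n * e - c * (2*\<alpha>*m * e)) / n = (1 - 2*\<alpha>*m*c / n) * e"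
    using np by (simp add: field_simps)
  then show ?thesis using s np unfolding beta e_def[symmetric] n_def[symmetric]
    by (metis divide_right_mono less_imp_le)
qed

end

theorem mainTheorem8:
  fixes W :: "real^'n::finite^'n"
    and \<alpha> \<delta> \<Delta> m M L \<epsilon> :: real
    and f f1 f2 :: "'n \<Rightarrow> real \<Rightarrow> real"
    and x0 xstar :: "real^'n"
  assumes n2: "CARD('n) \<ge> 2"
    and alpha_pos: "\<alpha> > 0"
    and W_sym: "transpose W = W"
    and W_nonneg: "\<forall>i j. 0 \<le> W $ i $ j"
    and W_lt1: "\<forall>i j. W $ i $ j < 1"
    and W_stoch: "W *v (1 :: real^'n) = 1"
    and W_null: "{x. (mat 1 - W) *v x = 0} = span {1 :: real^'n}"
    and delta_pos: "0 < \<delta>" and delta_Delta: "\<delta> \<le> \<Delta>" and Delta_lt1: "\<Delta> < 1"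
    and W_diag: "\<forall>i. \<delta> \<le> W $ i $ i \<and> W $ i $ i \<le> \<Delta>"
    and f_deriv: "\<forall>i s. (f i has_real_derivative f1 i s) (at s)"
    and f1_deriv: "\<forall>i s. (f1 i has_real_derivative f2 i s) (at s)"
    and f2_cont: "\<forall>i. continuous_on UNIV (f2 i)"
    and m_pos: "0 < m" and M_fin: "m \<le> M"
    and f2_bounds: "\<forall>i s. m \<le> f2 i s \<and> f2 i s \<le> M"
    and f2_lip: "\<forall>i a b. \<bar>f2 i a - f2 i b\<bar> \<le> L * \<bar>a - b\<bar>"
    and xstar_min: "\<forall>x. objF W \<alpha> f xstar \<le> objF W \<alpha> f x"
    and eps_pos: "0 < \<epsilon>"
    and eps_bound: "\<epsilon> < min 1 (2 * (lam_c \<alpha> \<delta> M / Lam_c \<alpha> \<delta> \<Delta> m) ^ 2)"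
  shows
   "0 < beta_c CARD('n) \<alpha> \<delta> \<Delta> m M \<epsilon> \<and> beta_c CARD('n) \<alpha> \<delta> \<Delta> m M \<epsilon> < 1 \<and>
    (\<forall>t::nat. t \<ge> 1 \<longrightarrow>
       expect_paths t (\<lambda>xs.
          norm (\<chi> i. sqrt (Ddiag W \<alpha> f2 (ann_iter W \<alpha> f1 f2 \<epsilon> x0 (butlast xs)) i)
                     * (ann_iter W \<alpha> f1 f2 \<epsilon> x0 xs $ i - xstar $ i)))
       \<le> sqrt (2 * (2 * (1 - \<delta>) + \<alpha> * M) * (1 - beta_c CARD('n) \<alpha> \<delta> \<Delta> m M \<epsilon>) ^ t / (\<alpha> * m)
                * (objF W \<alpha> f x0 - objF W \<alpha> f xstar)))"
proof -
  interpret annl W \<alpha> \<delta> \<Delta> m M f f1 f2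
    using alpha_pos W_sym W_nonneg W_lt1 W_stoch delta_pos delta_Delta Delta_lt1 W_diag
      f_deriv f1_deriv m_pos M_fin f2_bounds by unfold_locales
  define n where "n = real CARD('n)"
  have n2': "n \<ge> 2" using n2 by (simp add: n_def)
  define \<beta> where "\<beta> = beta_c CARD('n) \<alpha> \<delta> \<Delta> m M \<epsilon>"
  define c where "c = \<epsilon> * (lam - \<epsilon> * Lam^2 / (2*lam))"
  have lp: "lam > 0" by (rule lam_pos)
  have Lp: "Lam > 0" by (rule Lam_pos)
  have e1: "\<epsilon> < 1" using eps_bound by simp
  have e2: "\<epsilon> < 2 * (lam / Lam)^2" using eps_bound by (simp add: lam_def Lam_def)
  have es: "\<epsilon> * Lam^2 < 2 * lam^2"
    using e2 Lp by (simp add: power_divide field_simps)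
  have "\<epsilon> * Lam^2 / (2*lam) < lam" using es lp by (simp add: divide_less_eq power2_eq_square)
  then have cp: "c > 0" using eps_pos by (simp add: c_def)
  have beta: "\<beta> = 2*\<alpha>*m*c / n"
    using lp unfolding \<beta>_def beta_c_def lam_def[symmetric] Lam_def[symmetric] c_def n_def
    by (simp add: field_simps power2_eq_square)
  have amp: "\<alpha> * m > 0" using alpha_pos m_pos by simp
  have b0: "0 < \<beta>" unfolding beta using cp amp n2' by simp
  have clt: "c < lam"
  proof -
    have "\<epsilon> * Lam^2 / (2*lam) \<ge> 0" using lp eps_pos by simp
    then have "c \<le> \<epsilon> * lam" unfolding c_def using eps_pos by (simp add: mult_left_mono)
    also have "\<dots> < lam" using e1 lp by simp
    finally show ?thesis .
  qed
  have b1: "\<beta> < 1"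
  proof -
    have "\<alpha> * m * lam \<le> 1"
    proof -
      have am: "\<alpha>*m \<le> \<alpha>*M" by (rule mult_left_mono[OF M_fin]) (use alpha_pos in simp)
      have "\<alpha> * m \<le> 2*(1-\<delta>) + \<alpha>*M"
        using am delta_Delta Delta_lt1 by (smt (verit))
      then show ?thesis using Dmax_pos by (simp add: lam_eq)
    qed
    moreover have "2*\<alpha>*m*c / n \<le> \<alpha>*m*c"
    proof -
      have "(\<alpha>*m*c) * 2 \<le> (\<alpha>*m*c) * n" using n2' cp amp by (intro mult_left_mono) auto
      then show ?thesis using n2' by (simp add: divide_le_eq mult_ac)
    qed
    moreover have "\<alpha>*m*c < \<alpha>*m*lam" by (rule mult_strict_left_mono[OF clt amp])
    ultimately show ?thesis unfolding beta by linarith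
  qed
  define X where "X xs = ann_iter W \<alpha> f1 f2 \<epsilon> x0 xs" for xs
  define Fs where "Fs = objF W \<alpha> f xstar"
  define \<phi> where "\<phi> xs = objF W \<alpha> f (X xs) - Fs" for xs
  have Xsnoc: "X (xs @ [i]) = ann_step W \<alpha> f1 f2 \<epsilon> (X xs) i" for xs i
    by (simp add: X_def ann_iter_def)
  have phi_nn: "0 \<le> \<phi> xs" for xs using xstar_min by (simp add: \<phi>_def Fs_def)
  have contr: "expect_paths t \<phi> \<le> (1 - \<beta>)^t * \<phi> []" for t
  proof (induction t)
    case 0 then show ?case by (simp add: expect_0)
  next
    case (Suc t)
    have "expect_paths (Suc t) \<phi> = expect_paths t (\<lambda>xs. (\<Sum>i\<in>UNIV. \<phi> (xs @ [i])) / n)"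
      by (simp add: expect_Suc n_def)
    also have "\<dots> \<le> expect_paths t (\<lambda>xs. (1 - \<beta>) * \<phi> xs)"
    proof (rule expect_mono)
      fix xs :: "'n list"
      show "(\<Sum>i\<in>UNIV. \<phi> (xs @ [i])) / n \<le> (1 - \<beta>) * \<phi> xs"
        using contraction[OF xstar_min eps_pos es, of "X xs"]
        by (simp add: \<phi>_def Xsnoc Fs_def \<beta>_def n_def)
    qed
    also have "\<dots> = (1 - \<beta>) * expect_paths t \<phi>" by (rule expect_scale)
    also have "\<dots> \<le> (1 - \<beta>) * ((1 - \<beta>)^t * \<phi> [])"
      using Suc.IH b1 by (intro mult_left_mono) auto
    finally show ?case by simp
  qed
  define C where "C = (2*(1-\<delta>) + \<alpha>*M) * 2 / (\<alpha>*m)"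
  have Cp: "C \<ge> 0" using Dmax_pos amp by (simp add: C_def)
  define Y where "Y xs = norm (\<chi> i. sqrt (Ddiag W \<alpha> f2 (X (butlast xs)) i) * (X xs $ i - xstar $ i))" for xs
  have Ysq: "(Y xs)^2 \<le> C * \<phi> xs" for xs
  proof -
    define w where "w = X xs - xstar"
    have "(Y xs)^2 = (\<Sum>i\<in>UNIV. Ddiag W \<alpha> f2 (X (butlast xs)) i * (w$i)^2)"
      unfolding Y_def norm_sq_vec using D_pos
      by (simp add: power_mult_distrib w_def less_imp_le)
    also have "\<dots> \<le> (\<Sum>i\<in>UNIV. (2*(1-\<delta>) + \<alpha>*M) * (w$i)^2)"
      using D_bounds by (intro sum_mono mult_right_mono) auto
    also have "\<dots> = (2*(1-\<delta>) + \<alpha>*M) * (w \<bullet> w)"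
      by (simp add: inner_vec_def sum_distrib_left power2_eq_square)
    also have "\<dots> \<le> (2*(1-\<delta>) + \<alpha>*M) * (2 / (\<alpha>*m) * \<phi> xs)"
    proof (rule mult_left_mono)
      have "\<alpha>*m/2 * (w \<bullet> w) \<le> \<phi> xs"
        using dist_bound[OF xstar_min, of "X xs"] by (simp add: w_def \<phi>_def Fs_def)
      then show "w \<bullet> w \<le> 2 / (\<alpha>*m) * \<phi> xs" using amp by (simp add: field_simps)
      show "0 \<le> 2*(1-\<delta>) + \<alpha>*M" using Dmax_pos by simp
    qed
    also have "\<dots> = C * \<phi> xs" by (simp add: C_def)
    finally show ?thesis .
  qed
  have main: "expect_paths t Y \<le> sqrt (2 * (2 * (1 - \<delta>) + \<alpha> * M) * (1 - \<beta>) ^ t / (\<alpha> * m)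
                * (objF W \<alpha> f x0 - objF W \<alpha> f xstar))" for t
  proof -
    have yy: "sqrt ((Y xs)^2) = Y xs" for xs by (simp add: Y_def)
    have "expect_paths t Y = expect_paths t (\<lambda>xs. sqrt ((Y xs)^2))"
      by (simp only: yy)
    also have "\<dots> \<le> sqrt (expect_paths t (\<lambda>xs. (Y xs)^2))"
      by (rule expect_sqrt) simp
    also have "\<dots> \<le> sqrt (expect_paths t (\<lambda>xs. C * \<phi> xs))"
      by (intro real_sqrt_le_mono expect_mono Ysq)
    also have "\<dots> = sqrt (C * expect_paths t \<phi>)" by (simp add: expect_scale)
    also have "\<dots> \<le> sqrt (C * ((1 - \<beta>)^t * \<phi> []))"
      using contr[of t] Cp by (intro real_sqrt_le_mono mult_left_mono) auto
    also have "C * ((1 - \<beta>)^t * \<phi> []) = 2 * (2 * (1 - \<delta>) + \<alpha> * M) * (1 - \<beta>) ^ t / (\<alpha> * m)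
                * (objF W \<alpha> f x0 - objF W \<alpha> f xstar)"
      by (simp add: C_def \<phi>_def X_def ann_iter_def Fs_def)
    finally show ?thesis .
  qed
  show ?thesis
    using b0 b1 main unfolding \<beta>_def Y_def X_def by blast
qed

end
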